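(* Let $n\ge1$. For any ultrametric tree with $n$ leaves whose common distance from the root is $1$, with leaf distance matrix $D$, the matrix \[ \Big(1-\frac1n\Big)\mathbf{1}_{n\times n}-\frac12 D \] is positive semidefinite. Moreover, $1-\frac1n$ is the smallest such constant: for every real $c<1-\frac1n$ there is an ultrametric tree with $n$ leaves at common distance $1$ from the root for which $c\,\mathbf{1}_{n\times n}-\frac12 D$ is not positive semidefinite.
   Context: An ultrametric tree is a rooted tree with nonnegative edge lengths such that all leaves are at the same distance from the root; the distance between two vertices is the sum of edge lengths along the unique path joining them. For a tree with leaves labeled $1,\dots,n$, the leaf distance matrix $D$ is the $n\times n$ matrix whose $(i,j)$ entry is the distance between leaves $i$ and $j$. $\mathbf{1}_{n\times n}$ is the $n\times n$ all-ones matrix. *)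

theory Defs
  imports Complex_Main
begin

text \<open>A rooted tree on a finite vertex set V with root r, given by a parent map par:
  every vertex other than the root has its parent in V, and every vertex reaches
  the root by iterating par. (This forces acyclicity.) Tree edges are the pairs
  {v, par v} for v in V - {r}; the length of the edge {v, par v} is w v.\<close>
definition rooted_tree :: "'v set \<Rightarrow> 'v \<Rightarrow> ('v \<Rightarrow> 'v) \<Rightarrow> bool" where
  "rooted_tree V r par \<longleftrightarrow> finite V \<and> r \<in> V \<and>
     (\<forall>v\<in>V. v \<noteq> r \<longrightarrow> par v \<in> V) \<and> (\<forall>v\<in>V. \<exists>k. (par ^^ k) v = r)"

definition height_steps :: "'v \<Rightarrow> ('v \<Rightarrow> 'v) \<Rightarrow> 'v \<Rightarrow> nat" where
  "height_steps r par v = (LEAST k. (par ^^ k) v = r)"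

text \<open>Non-root vertices on the path from v to the root (v included when v is not the root);
  each such vertex x stands for the edge {x, par x}.\<close>
definition up_path :: "'v \<Rightarrow> ('v \<Rightarrow> 'v) \<Rightarrow> 'v \<Rightarrow> 'v set" where
  "up_path r par v = {(par ^^ k) v | k. k < height_steps r par v}"

text \<open>Distance between two vertices: sum of the edge lengths along the unique path joining
  them, i.e. over the edges lying on exactly one of the two root paths.\<close>
definition tree_dist :: "'v \<Rightarrow> ('v \<Rightarrow> 'v) \<Rightarrow> ('v \<Rightarrow> real) \<Rightarrow> 'v \<Rightarrow> 'v \<Rightarrow> real" where
  "tree_dist r par w u v =
     (\<Sum>x \<in> (up_path r par u - up_path r par v) \<union> (up_path r par v - up_path r par u). w x)"

definition tree_leaves :: "'v set \<Rightarrow> 'v \<Rightarrow> ('v \<Rightarrow> 'v) \<Rightarrow> 'v set" where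
  "tree_leaves V r par = {v \<in> V. v \<noteq> r \<and> \<not> (\<exists>x\<in>V. x \<noteq> r \<and> par x = v)}"

definition ultrametric_tree1 ::
  "'v set \<Rightarrow> 'v \<Rightarrow> ('v \<Rightarrow> 'v) \<Rightarrow> ('v \<Rightarrow> real) \<Rightarrow> (nat \<Rightarrow> 'v) \<Rightarrow> nat \<Rightarrow> bool" where
  "ultrametric_tree1 V r par w leaf n \<longleftrightarrow>
     rooted_tree V r par \<and> (\<forall>v\<in>V. v \<noteq> r \<longrightarrow> 0 \<le> w v) \<and>
     bij_betw leaf {1..n} (tree_leaves V r par) \<and>
     (\<forall>v \<in> tree_leaves V r par. tree_dist r par w v r = 1)"

definition leaf_dist_matrix ::
  "'v \<Rightarrow> ('v \<Rightarrow> 'v) \<Rightarrow> ('v \<Rightarrow> real) \<Rightarrow> (nat \<Rightarrow> 'v) \<Rightarrow> nat \<Rightarrow> nat \<Rightarrow> real" where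
  "leaf_dist_matrix r par w leaf i j = tree_dist r par w (leaf i) (leaf j)"

definition psd :: "nat \<Rightarrow> (nat \<Rightarrow> nat \<Rightarrow> real) \<Rightarrow> bool" where
  "psd n M \<longleftrightarrow> (\<forall>i\<in>{1..n}. \<forall>j\<in>{1..n}. M i j = M j i) \<and>
     (\<forall>x :: nat \<Rightarrow> real. 0 \<le> (\<Sum>i=1..n. \<Sum>j=1..n. x i * M i j * x j))"

end

theory Submission
  imports Defs
begin

lemma up_path_props:
  assumes vV: "v \<in> V" and par: "\<forall>u\<in>V. u \<noteq> r \<longrightarrow> par u \<in> V"
    and x: "x \<in> up_path r par v"
  shows "x \<in> V \<and> x \<noteq> r"
proof -
  obtain k where k: "x = (par ^^ k) v" "k < height_steps r par v"
    using x unfolding up_path_def by blast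
  have ne: "(par ^^ m) v \<noteq> r" if "m < height_steps r par v" for m
    using that not_less_Least unfolding height_steps_def by blast
  have "(par ^^ m) v \<in> V" if "m < height_steps r par v" for m
    using that
  proof (induction m)
    case 0 then show ?case using vV by simp
  next
    case (Suc m)
    then have "(par ^^ m) v \<in> V" "(par ^^ m) v \<noteq> r" using ne by auto
    then show ?case using par by simp
  qed
  then show ?thesis using k ne by blast
qed

lemma up_path_finite: "finite (up_path r par v)"
proof -
  have "up_path r par v = (\<lambda>k. (par ^^ k) v) ` {..<height_steps r par v}"
    unfolding up_path_def by auto
  then show ?thesis by simp
qed

lemma up_path_root: "up_path r par r = {}"
proof -
  have "height_steps r par r = 0"
    unfolding height_steps_def by (rule Least_eq_0) simp
  then show ?thesis unfolding up_path_def by simp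
qed

lemma sum_symdiff:
  fixes f :: "'a \<Rightarrow> real"
  assumes "finite A" "finite B"
  shows "sum f ((A - B) \<union> (B - A)) = sum f A + sum f B - 2 * sum f (A \<inter> B)"
proof -
  have d: "(A - B) \<inter> (B - A) = {}" by blast
  have "sum f ((A - B) \<union> (B - A)) = sum f (A - B) + sum f (B - A)"
    using assms d by (simp add: sum.union_disjoint)
  moreover have "sum f A = sum f (A \<inter> B) + sum f (A - B)"
    by (rule sum.Int_Diff[OF assms(1)])
  moreover have "sum f B = sum f (B \<inter> A) + sum f (B - A)"
    by (rule sum.Int_Diff[OF assms(2)])
  moreover have "B \<inter> A = A \<inter> B" by blast
  ultimately show ?thesis by simp
qed

lemma key_ineq:
  fixes w :: "'v \<Rightarrow> real" and P :: "nat \<Rightarrow> 'v set" and x :: "nat \<Rightarrow> real"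
  assumes I: "finite I" "card I = n" "n \<ge> 1"
    and E: "E = (\<Union>i\<in>I. P i)" "\<And>i. i \<in> I \<Longrightarrow> finite (P i)"
    and w: "\<And>e. e \<in> E \<Longrightarrow> 0 \<le> w e"
    and one: "\<And>i. i \<in> I \<Longrightarrow> sum w (P i) = 1"
  shows "0 \<le> (\<Sum>i\<in>I. \<Sum>j\<in>I. x i * (sum w (P i \<inter> P j) - 1 / real n) * x j)"
proof -
  have fE: "finite E" using E I by auto
  define b where "b i e = (if e \<in> P i then 1 else (0::real))" for i e
  define X where "X e = (\<Sum>i\<in>I. x i * b i e)" for e
  define S where "S = (\<Sum>i\<in>I. x i)"
  define W where "W = sum w E"
  have sub: "P i \<subseteq> E" if "i \<in> I" for i using that E by auto
  have h: "sum w (P i \<inter> P j) = (\<Sum>e\<in>E. w e * b i e * b j e)" if "i \<in> I" for i j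
  proof -
    have "(\<Sum>e\<in>E. w e * b i e * b j e) = (\<Sum>e\<in>E. if e \<in> P i \<inter> P j then w e else 0)"
      by (rule sum.cong) (auto simp: b_def)
    also have "\<dots> = sum w (E \<inter> (P i \<inter> P j))"
      using fE by (simp add: sum.inter_restrict)
    also have "E \<inter> (P i \<inter> P j) = P i \<inter> P j" using sub[OF that] by blast
    finally show ?thesis by simp
  qed
  have p1: "sum w (P i) = (\<Sum>e\<in>E. w e * b i e)" if "i \<in> I" for i
  proof -
    have "(\<Sum>e\<in>E. w e * b i e) = (\<Sum>e\<in>E. if e \<in> P i then w e else 0)"
      by (rule sum.cong) (auto simp: b_def)
    also have "\<dots> = sum w (E \<inter> P i)"
      using fE by (simp add: sum.inter_restrict)
    also have "E \<inter> P i = P i" using sub[OF that] by blast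
    finally show ?thesis by simp
  qed
  have Q: "(\<Sum>i\<in>I. \<Sum>j\<in>I. x i * (sum w (P i \<inter> P j) - 1 / real n) * x j)
      = (\<Sum>e\<in>E. w e * (X e)^2) - S^2 / n"
  proof -
    have "(\<Sum>i\<in>I. \<Sum>j\<in>I. x i * (sum w (P i \<inter> P j) - 1 / real n) * x j)
        = (\<Sum>i\<in>I. \<Sum>j\<in>I. (\<Sum>e\<in>E. w e * (x i * b i e) * (x j * b j e)) - x i * x j / n)"
      by (rule sum.cong[OF refl], rule sum.cong[OF refl])
         (simp add: h algebra_simps sum_distrib_left sum_distrib_right sum_subtractf)
    also have "\<dots> = (\<Sum>i\<in>I. \<Sum>j\<in>I. (\<Sum>e\<in>E. w e * (x i * b i e) * (x j * b j e)))
                 - (\<Sum>i\<in>I. \<Sum>j\<in>I. x i * x j / n)"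
      by (simp add: sum_subtractf)
    also have "(\<Sum>i\<in>I. \<Sum>j\<in>I. x i * x j / n) = S^2 / n"
      by (simp add: S_def power2_eq_square sum_product sum_divide_distrib)
    also have "(\<Sum>i\<in>I. \<Sum>j\<in>I. (\<Sum>e\<in>E. w e * (x i * b i e) * (x j * b j e)))
             = (\<Sum>e\<in>E. w e * (X e)^2)"
    proof -
      have "(\<Sum>i\<in>I. \<Sum>j\<in>I. (\<Sum>e\<in>E. w e * (x i * b i e) * (x j * b j e)))
          = (\<Sum>e\<in>E. \<Sum>i\<in>I. \<Sum>j\<in>I. w e * (x i * b i e) * (x j * b j e))"
      proof -
        have "(\<Sum>i\<in>I. \<Sum>j\<in>I. (\<Sum>e\<in>E. w e * (x i * b i e) * (x j * b j e)))
          = (\<Sum>i\<in>I. \<Sum>e\<in>E. \<Sum>j\<in>I. w e * (x i * b i e) * (x j * b j e))"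
          by (rule sum.cong[OF refl], rule sum.swap)
        also have "\<dots> = (\<Sum>e\<in>E. \<Sum>i\<in>I. \<Sum>j\<in>I. w e * (x i * b i e) * (x j * b j e))"
          by (rule sum.swap)
        finally show ?thesis .
      qed
      also have "\<dots> = (\<Sum>e\<in>E. w e * (X e)^2)"
      proof (rule sum.cong[OF refl])
        fix e
        have "(X e)^2 = (\<Sum>i\<in>I. \<Sum>j\<in>I. (x i * b i e) * (x j * b j e))"
          unfolding X_def power2_eq_square by (rule sum_product)
        then show "(\<Sum>i\<in>I. \<Sum>j\<in>I. w e * (x i * b i e) * (x j * b j e)) = w e * (X e)^2"
          by (simp add: sum_distrib_left mult.assoc)
      qed
      finally show ?thesis .
    qed
    finally show ?thesis .
  qed
  have SX: "S = (\<Sum>e\<in>E. w e * X e)"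
  proof -
    have "S = (\<Sum>i\<in>I. x i * (\<Sum>e\<in>E. w e * b i e))"
      unfolding S_def by (rule sum.cong) (auto simp: p1[symmetric] one)
    also have "\<dots> = (\<Sum>e\<in>E. w e * X e)"
    proof -
      have "(\<Sum>i\<in>I. x i * (\<Sum>e\<in>E. w e * b i e)) = (\<Sum>i\<in>I. \<Sum>e\<in>E. w e * (x i * b i e))"
        by (simp add: sum_distrib_left algebra_simps)
      also have "\<dots> = (\<Sum>e\<in>E. \<Sum>i\<in>I. w e * (x i * b i e))" by (rule sum.swap)
      also have "\<dots> = (\<Sum>e\<in>E. w e * X e)" by (simp add: X_def sum_distrib_left)
      finally show ?thesis .
    qed
    finally show ?thesis .
  qed
  have Wn: "W \<le> n"
  proof -
    have "W \<le> (\<Sum>e\<in>E. \<Sum>i\<in>I. w e * b i e)"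
      unfolding W_def
    proof (rule sum_mono)
      fix e assume e: "e \<in> E"
      then obtain i where i: "i \<in> I" "e \<in> P i" using E by blast
      have "w e = w e * b i e" using i by (simp add: b_def)
      also have "\<dots> \<le> (\<Sum>i\<in>I. w e * b i e)"
        using i I w[OF e] by (intro member_le_sum) (auto simp: b_def)
      finally show "w e \<le> (\<Sum>i\<in>I. w e * b i e)" .
    qed
    also have "\<dots> = (\<Sum>i\<in>I. \<Sum>e\<in>E. w e * b i e)" by (rule sum.swap)
    also have "\<dots> = (\<Sum>i\<in>I. 1)" by (rule sum.cong) (auto simp: p1[symmetric] one)
    also have "\<dots> = n" using I by simp
    finally show ?thesis .
  qed
  have W0: "0 \<le> W" unfolding W_def using w by (simp add: sum_nonneg)
  have "0 \<le> (\<Sum>e\<in>E. w e * (X e - S / n)^2)"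
    using w by (simp add: sum_nonneg)
  also have "\<dots> = (\<Sum>e\<in>E. w e * (X e)^2) - 2 * (S / n) * (\<Sum>e\<in>E. w e * X e) + (S/n)^2 * W"
  proof -
    have "(\<Sum>e\<in>E. w e * (X e - S / n)^2)
        = (\<Sum>e\<in>E. w e * (X e)^2 - (2 * (S / n)) * (w e * X e) + (S/n)^2 * w e)"
      by (rule sum.cong) (auto simp: power2_eq_square algebra_simps)
    also have "\<dots> = (\<Sum>e\<in>E. w e * (X e)^2) - 2 * (S / n) * (\<Sum>e\<in>E. w e * X e) + (S/n)^2 * W"
      by (simp add: W_def sum.distrib sum_subtractf sum_distrib_left)
    finally show ?thesis .
  qed
  finally have A: "0 \<le> (\<Sum>e\<in>E. w e * (X e)^2) - 2 * S^2 / n + (S/n)^2 * W"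
    by (simp add: SX power2_eq_square)
  have npos: "0 < real n" using I by simp
  have "(S/n)^2 * W \<le> (S/n)^2 * n" using Wn by (simp add: mult_left_mono)
  also have "\<dots> = S^2 / n" using npos by (simp add: power2_eq_square field_simps)
  finally have "0 \<le> (\<Sum>e\<in>E. w e * (X e)^2) - S^2 / n" using A by simp
  then show ?thesis using Q by simp
qed


lemma part1:
  fixes n :: nat
  assumes n: "n \<ge> 1" and T: "ultrametric_tree1 V r par w leaf n"
  shows "psd n (\<lambda>i j. (1 - 1 / real n) - leaf_dist_matrix r par w leaf i j / 2)"
proof -
  have rt: "rooted_tree V r par" and w0: "\<forall>v\<in>V. v \<noteq> r \<longrightarrow> 0 \<le> w v"
    and bij: "bij_betw leaf {1..n} (tree_leaves V r par)"
    and d1: "\<forall>v \<in> tree_leaves V r par. tree_dist r par w v r = 1"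
    using T unfolding ultrametric_tree1_def by auto
  have par: "\<forall>u\<in>V. u \<noteq> r \<longrightarrow> par u \<in> V" using rt unfolding rooted_tree_def by auto
  define P where "P i = up_path r par (leaf i)" for i
  define E where "E = (\<Union>i\<in>{1..n}. P i)"
  have lf: "leaf i \<in> tree_leaves V r par" if "i \<in> {1..n}" for i
    using bij that by (auto simp: bij_betw_def)
  have lV: "leaf i \<in> V" if "i \<in> {1..n}" for i
    using lf[OF that] unfolding tree_leaves_def by auto
  have wE: "0 \<le> w e" if eE: "e \<in> E" for e
  proof -
    obtain i where i: "i \<in> {1..n}" "e \<in> P i" using eE unfolding E_def by blast
    show ?thesis using up_path_props[OF lV[OF i(1)] par i(2)[unfolded P_def]] w0 by auto
  qed
  have one: "sum w (P i) = 1" if "i \<in> {1..n}" for i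
    using d1 lf[OF that] by (simp add: tree_dist_def up_path_root P_def)
  have ent: "(1 - 1 / real n) - leaf_dist_matrix r par w leaf i j / 2
      = sum w (P i \<inter> P j) - 1 / real n" if "i \<in> {1..n}" "j \<in> {1..n}" for i j
    unfolding leaf_dist_matrix_def tree_dist_def
    using sum_symdiff[OF up_path_finite up_path_finite, of w r par "leaf i" r par "leaf j"]
      one[OF that(1)] one[OF that(2)] by (simp add: P_def field_simps)
  have K: "0 \<le> (\<Sum>i\<in>{1..n}. \<Sum>j\<in>{1..n}. x i * (sum w (P i \<inter> P j) - 1 / real n) * x j)"
    for x
    by (rule key_ineq[where E=E]) (use n wE one E_def in \<open>auto simp: P_def up_path_finite\<close>)
  show ?thesis
    unfolding psd_def
  proof (intro conjI ballI allI)
    fix i j assume "i \<in> {1..n}" "j \<in> {1..n}"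
    show "1 - 1 / real n - leaf_dist_matrix r par w leaf i j / 2 =
          1 - 1 / real n - leaf_dist_matrix r par w leaf j i / 2"
      unfolding leaf_dist_matrix_def tree_dist_def by (simp add: Un_commute)
  next
    fix x :: "nat \<Rightarrow> real"
    have "(\<Sum>i=1..n. \<Sum>j=1..n. x i * (1 - 1 / real n - leaf_dist_matrix r par w leaf i j / 2) * x j)
        = (\<Sum>i\<in>{1..n}. \<Sum>j\<in>{1..n}. x i * (sum w (P i \<inter> P j) - 1 / real n) * x j)"
      by (intro sum.cong refl) (simp add: ent)
    then show "0 \<le> (\<Sum>i=1..n. \<Sum>j=1..n. x i * (1 - 1 / real n - leaf_dist_matrix r par w leaf i j / 2) * x j)"
      using K by simp
  qed
qed

lemma part2:
  fixes n :: nat and c :: real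
  assumes n: "n \<ge> 1" and c: "c < 1 - 1 / real n"
  shows "\<exists>(V :: nat set) r par w leaf.
               ultrametric_tree1 V r par w leaf n \<and>
               \<not> psd n (\<lambda>i j. c - leaf_dist_matrix r par w leaf i j / 2)"
proof -
  define V where "V = {0..n}"
  define par :: "nat \<Rightarrow> nat" where "par = (\<lambda>_. 0)"
  define w :: "nat \<Rightarrow> real" where "w = (\<lambda>_. 1)"
  have hs: "height_steps 0 par v = 1" if "v \<noteq> 0" for v
    unfolding height_steps_def
  proof (rule Least_equality)
    show "(par ^^ 1) v = 0" by (simp add: par_def)
    fix y assume "(par ^^ y) v = 0"
    then show "1 \<le> y" using that by (cases y) auto
  qed
  have up: "up_path 0 par v = {v}" if "v \<noteq> 0" for v
    using hs[OF that] unfolding up_path_def by auto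
  have lv: "tree_leaves V 0 par = {1..n}"
    unfolding tree_leaves_def V_def par_def by auto
  have td: "tree_dist 0 par w u v = (if u = v then 0 else 2)" if "u \<noteq> 0" "v \<noteq> 0" for u v
    using that by (auto simp: tree_dist_def up w_def insert_Diff_if)
  have T: "ultrametric_tree1 V 0 par w id n"
    unfolding ultrametric_tree1_def rooted_tree_def
  proof (intro conjI ballI impI)
    show "finite V" "0 \<in> V" unfolding V_def by auto
    fix v assume "v \<in> V"
    show "par v \<in> V" unfolding par_def V_def by simp
    show "\<exists>k. (par ^^ k) v = 0" by (rule exI[of _ 1]) (simp add: par_def)
  next
    fix v show "0 \<le> w v" by (simp add: w_def)
  next
    show "bij_betw id {1..n} (tree_leaves V 0 par)" using lv by simp
  next
    fix v assume "v \<in> tree_leaves V 0 par"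
    then have "v \<noteq> 0" using lv by auto
    then show "tree_dist 0 par w v 0 = 1"
      by (simp add: tree_dist_def up up_path_root w_def)
  qed
  have np: "psd n (\<lambda>i j. c - leaf_dist_matrix 0 par w id i j / 2) \<Longrightarrow> False"
  proof -
    assume p: "psd n (\<lambda>i j. c - leaf_dist_matrix 0 par w id i j / 2)"
    have "0 \<le> (\<Sum>i=1..n. \<Sum>j=1..n. (\<lambda>_. 1::real) i * (c - leaf_dist_matrix 0 par w id i j / 2) * (\<lambda>_. 1) j)"
      using p unfolding psd_def by (rule conjE) (erule allE)
    also have "\<dots> = (\<Sum>i=1..n. \<Sum>j=1..n. (c - 1) + (if i = j then 1 else 0))"
      by (intro sum.cong refl) (auto simp: leaf_dist_matrix_def td)
    also have "\<dots> = (\<Sum>i=1..n. n * (c - 1) + 1)"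
      by (intro sum.cong refl) (simp add: sum.distrib)
    also have "\<dots> = n * (n * (c - 1) + 1)" by simp
    finally have A: "0 \<le> real n * (real n * (c - 1) + 1)" .
    have npos: "0 < real n" using n by simp
    have "real n * (c - 1) + 1 < 0"
    proof -
      have "c - 1 < - 1 / real n" using c by simp
      then have "real n * (c - 1) < real n * (- 1 / real n)" using npos
        by (intro mult_strict_left_mono) auto
      then show ?thesis using npos by simp
    qed
    then show False using A npos by (simp add: mult_less_0_iff zero_le_mult_iff)
  qed
  show ?thesis using T np by blast
qed

theorem theorem1p8:
  fixes n :: nat
  assumes "n \<ge> 1"
  shows "(\<forall>(V :: 'v set) r par w leaf.
            ultrametric_tree1 V r par w leaf n \<longrightarrow>
            psd n (\<lambda>i j. (1 - 1 / real n) - leaf_dist_matrix r par w leaf i j / 2))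
       \<and> (\<forall>c :: real. c < 1 - 1 / real n \<longrightarrow>
            (\<exists>(V :: nat set) r par w leaf.
               ultrametric_tree1 V r par w leaf n \<and>
               \<not> psd n (\<lambda>i j. c - leaf_dist_matrix r par w leaf i j / 2)))"
  using part1[OF assms] part2[OF assms] by blast

end
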